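(* Let $F$ be a $4$-regular graph, let $D$ be a directed version of $F$, let $\mathbf{o}$ be a transitional orientation of $F$, and let $P$ be a circuit partition of $F$. Then for every closed walk $W$ of $F$, \[\sigma(D,W)\cdot \Delta_{D,\mathbf{o}}|_{\tau(P)} = \sigma(\mathrm{Tch}_{\mathbf{o}}(P),\pi_P(W)),\] where the $\sigma$-vectors are regarded as row vectors.
   Context: Graphs: $G=(V,H,E,\epsilon)$ with finite sets of vertices $V$ and half-edges $H$, a partition $E$ of $H$ into unordered pairs (edges), and $\epsilon:H\to V$; loops and multiple edges allowed. A directed version orders each edge as (tail, head). A single transition is an unordered pair of distinct half-edges incident with a common vertex; a directed single transition is such an ordered pair. A closed walk is a sequence $((h_1,h_2),\dots,(h_{n-1},h_n))$ of directed single transitions with $\{h_2,h_3\},\{h_4,h_5\},\dots,\{h_n,h_1\}$ edges, up to cyclic shift. For a directed version $D$ and closed walk $W$, $\sigma(D,W)\in\mathbb Z^{E}$ counts, at each edge $e$, traversals of $e$ along its direction minus traversals against it. A circuit is a nonempty closed walk using each half-edge at most once, with orientation forgotten. $F$ is $4$-regular if every vertex is incident with exactly $4$ half-edges. A transition at $v$ is a partition of the four half-edges at $v$ into two single transitions; $\mathfrak T(F)$ is the set of all transitions. A circuit partition $P$ is a set of circuits of $F$ such that every half-edge lies in exactly one single transition of exactly one circuit of $P$; $\tau(P)$ is the set of transitions both of whose single transitions occur in circuits of $P$ (one transition per vertex). The touch-graph $\mathrm{Tch}(P)$ has vertex set $P$, half-edge set the set of single transitions occurring in circuits of $P$, edge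 set $\tau(P)$ (each transition being a pair of single transitions), and maps each single transition to the circuit containing it. A transitional orientation $\mathbf o$ assigns to each $t\in\mathfrak T(F)$ one of its two single transitions $\mathbf o(t)$. $\mathrm{Tch}_{\mathbf o}(P)$ is the directed version of $\mathrm{Tch}(P)$ in which each edge $t$ has head $\mathbf o(t)$ and tail the other single transition of $t$. For a closed walk $W$ of $F$, $\pi_P(W)$ is obtained by replacing each directed single transition $(h,h')$ of $W$ by $(s,s')$, where $s,s'$ are the single transitions of circuits of $P$ containing $h$, $h'$ respectively, and deleting the pairs with $s=s'$; it is a closed walk of $\mathrm{Tch}(P)$ in which each remaining pair $(s,s')$ traverses the edge $\{s,s'\}\in\tau(P)$ from half-edge $s$ to half-edge $s'$. The edge-transition incidence matrix $\Delta_{D,\mathbf o}$ is the $E(F)\times\mathfrak T(F)$ matrix over $\mathbb Q$ whose $(e,t)$ entry is $1$ if $e\cap\mathbf o(t)=\{h\}$ with $h$ the tail of $e$ in $D$, $-1$ if $e\cap \mathbf o(t)=\{h\}$ with $h$ the head of $e$ in $D$, and $0$ otherwise. For $Y\subseteq\mathfrak T(F)$, $A|_Y$ denotes the column restriction to $Y$. *)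

theory Defs
  imports Main "HOL.Rat"
begin

definition graph :: "'v set \<Rightarrow> 'h set \<Rightarrow> 'h set set \<Rightarrow> ('h \<Rightarrow> 'v) \<Rightarrow> bool" where
  "graph V H E eps \<longleftrightarrow> finite V \<and> finite H \<and>
     (\<forall>e\<in>E. e \<subseteq> H \<and> card e = 2) \<and> (\<forall>h\<in>H. \<exists>!e. e \<in> E \<and> h \<in> e) \<and>
     (\<forall>h\<in>H. eps h \<in> V)"

text \<open>A directed version is given by choosing the tail of each edge; the head is the other half-edge.\<close>
definition directed_version :: "'h set set \<Rightarrow> ('h set \<Rightarrow> 'h) \<Rightarrow> bool" where
  "directed_version E tailf \<longleftrightarrow> (\<forall>e\<in>E. tailf e \<in> e)"

definition four_regular :: "'v set \<Rightarrow> 'h set \<Rightarrow> ('h \<Rightarrow> 'v) \<Rightarrow> bool" where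
  "four_regular V H eps \<longleftrightarrow> (\<forall>v\<in>V. card {h\<in>H. eps h = v} = 4)"

definition single_transition :: "'h set \<Rightarrow> ('h \<Rightarrow> 'v) \<Rightarrow> 'h set \<Rightarrow> bool" where
  "single_transition H eps s \<longleftrightarrow> (\<exists>a b. s = {a, b} \<and> a \<noteq> b \<and> a \<in> H \<and> b \<in> H \<and> eps a = eps b)"

definition dir_single_transition :: "'h set \<Rightarrow> ('h \<Rightarrow> 'v) \<Rightarrow> 'h \<times> 'h \<Rightarrow> bool" where
  "dir_single_transition H eps p \<longleftrightarrow>
     fst p \<noteq> snd p \<and> fst p \<in> H \<and> snd p \<in> H \<and> eps (fst p) = eps (snd p)"

text \<open>A closed walk ((h1,h2),...,(h(n-1),hn)) as a list of directed single transitions; the edges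
  {h2,h3},...,{hn,h1} join consecutive entries cyclically.\<close>
definition closed_walk :: "'h set \<Rightarrow> 'h set set \<Rightarrow> ('h \<Rightarrow> 'v) \<Rightarrow> ('h \<times> 'h) list \<Rightarrow> bool" where
  "closed_walk H E eps W \<longleftrightarrow> (\<forall>p\<in>set W. dir_single_transition H eps p) \<and>
     (\<forall>i<length W. {snd (W ! i), fst (W ! (Suc i mod length W))} \<in> E)"

definition walk_travs :: "('h \<times> 'h) list \<Rightarrow> ('h \<times> 'h) list" where
  "walk_travs W = map (\<lambda>i. (snd (W ! i), fst (W ! (Suc i mod length W)))) [0..<length W]"

definition sigma_trav :: "('x set \<Rightarrow> 'x) \<Rightarrow> ('x \<times> 'x) list \<Rightarrow> 'x set \<Rightarrow> int" where
  "sigma_trav tailf trs e = (\<Sum>p\<leftarrow>trs. if {fst p, snd p} = e then (if fst p = tailf e then 1 else -1) else 0)"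

definition sigma :: "('h set \<Rightarrow> 'h) \<Rightarrow> ('h \<times> 'h) list \<Rightarrow> 'h set \<Rightarrow> int" where
  "sigma tailf W = sigma_trav tailf (walk_travs W)"

text \<open>Circuits: equivalence classes of nonempty closed walks using every half-edge at most once,
  under cyclic shift and reversal.\<close>
definition walk_half_edges :: "('h \<times> 'h) list \<Rightarrow> 'h list" where
  "walk_half_edges W = concat (map (\<lambda>p. [fst p, snd p]) W)"

definition reverse_walk :: "('h \<times> 'h) list \<Rightarrow> ('h \<times> 'h) list" where
  "reverse_walk W = rev (map prod.swap W)"

definition walk_class :: "('h \<times> 'h) list \<Rightarrow> ('h \<times> 'h) list set" where
  "walk_class W = {rotate k W' | k W'. W' \<in> {W, reverse_walk W}}"

definition circuit :: "'h set \<Rightarrow> 'h set set \<Rightarrow> ('h \<Rightarrow> 'v) \<Rightarrow> ('h \<times> 'h) list set \<Rightarrow> bool" where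
  "circuit H E eps C \<longleftrightarrow> (\<exists>W. closed_walk H E eps W \<and> W \<noteq> [] \<and>
      distinct (walk_half_edges W) \<and> C = walk_class W)"

definition circ_strans :: "('h \<times> 'h) list set \<Rightarrow> 'h set set" where
  "circ_strans C = (\<Union>W\<in>C. (\<lambda>p. {fst p, snd p}) ` set W)"

definition transitions :: "'v set \<Rightarrow> 'h set \<Rightarrow> ('h \<Rightarrow> 'v) \<Rightarrow> 'h set set set" where
  "transitions V H eps = {t. \<exists>v\<in>V. \<exists>s1 s2. t = {s1, s2} \<and> single_transition H eps s1 \<and>
      single_transition H eps s2 \<and> s1 \<inter> s2 = {} \<and> s1 \<union> s2 = {h\<in>H. eps h = v}}"

definition transitional_orientation ::
  "'v set \<Rightarrow> 'h set \<Rightarrow> ('h \<Rightarrow> 'v) \<Rightarrow> ('h set set \<Rightarrow> 'h set) \<Rightarrow> bool" where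
  "transitional_orientation V H eps ori \<longleftrightarrow> (\<forall>t\<in>transitions V H eps. ori t \<in> t)"

definition circuit_partition ::
  "'h set \<Rightarrow> 'h set set \<Rightarrow> ('h \<Rightarrow> 'v) \<Rightarrow> ('h \<times> 'h) list set set \<Rightarrow> bool" where
  "circuit_partition H E eps P \<longleftrightarrow> (\<forall>C\<in>P. circuit H E eps C) \<and>
     (\<forall>h\<in>H. \<exists>!(C, s). C \<in> P \<and> s \<in> circ_strans C \<and> h \<in> s)"

text \<open>Single transitions occurring in circuits of P (half-edges of the touch-graph).\<close>
definition P_strans :: "('h \<times> 'h) list set set \<Rightarrow> 'h set set" where
  "P_strans P = (\<Union>C\<in>P. circ_strans C)"

definition tau :: "'v set \<Rightarrow> 'h set \<Rightarrow> ('h \<Rightarrow> 'v) \<Rightarrow> ('h \<times> 'h) list set set \<Rightarrow> 'h set set set" where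
  "tau V H eps P = {t \<in> transitions V H eps. \<forall>s\<in>t. s \<in> P_strans P}"

text \<open>Tch_o(P): the edge t has head ori t and tail the other single transition of t.\<close>
definition tch_tail :: "('h set set \<Rightarrow> 'h set) \<Rightarrow> 'h set set \<Rightarrow> 'h set" where
  "tch_tail ori t = (THE s. s \<in> t \<and> s \<noteq> ori t)"

definition st_of :: "('h \<times> 'h) list set set \<Rightarrow> 'h \<Rightarrow> 'h set" where
  "st_of P h = (THE s. s \<in> P_strans P \<and> h \<in> s)"

text \<open>pi_P(W), as the list of its edge traversals (s,s') of Tch(P).\<close>
definition pi_P :: "('h \<times> 'h) list set set \<Rightarrow> ('h \<times> 'h) list \<Rightarrow> ('h set \<times> 'h set) list" where
  "pi_P P W = filter (\<lambda>q. fst q \<noteq> snd q) (map (\<lambda>p. (st_of P (fst p), st_of P (snd p))) W)"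

definition Delta :: "('h set \<Rightarrow> 'h) \<Rightarrow> ('h set set \<Rightarrow> 'h set) \<Rightarrow> 'h set \<Rightarrow> 'h set set \<Rightarrow> rat" where
  "Delta tailf ori e t =
     (if \<exists>h. e \<inter> ori t = {h} then
        (if e \<inter> ori t = {tailf e} then 1 else -1)
      else 0)"

end

theory Submission
  imports Defs
begin

lemma delta_trav:
  assumes "a \<noteq> b" "tv \<in> {a,b}"
  shows "(if a = tv then 1 else -1) * (if \<exists>h. {a,b} \<inter> Oset = {h} then (if {a,b} \<inter> Oset = {tv} then 1 else -1) else (0::rat))
     = (if a \<in> Oset then 1 else 0) - (if b \<in> Oset then 1 else 0)"
  using assms by (cases "a \<in> Oset"; cases "b \<in> Oset"; auto)

lemma shift_sum:
  fixes h :: "nat \<Rightarrow> 'a::comm_monoid_add"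
  shows "(\<Sum>i<n. h (Suc i mod n)) = (\<Sum>i<n. h i)"
proof (cases n)
  case 0 then show ?thesis by simp
next
  case (Suc m)
  have "(\<Sum>i<Suc m. h (Suc i mod Suc m)) = (\<Sum>i<m. h (Suc i mod Suc m)) + h 0"
    by simp
  also have "(\<Sum>i<m. h (Suc i mod Suc m)) = (\<Sum>i<m. h (Suc i))"
    by (rule sum.cong) auto
  also have "(\<Sum>i<m. h (Suc i)) + h 0 = (\<Sum>i<Suc m. h i)"
    by (subst sum.lessThan_Suc_shift) (simp add: add.commute)
  finally show ?thesis using Suc by simp
qed

lemma pair_case:
  assumes "o1 \<noteq> ot" "t = {o1, ot}" "o1 \<inter> ot = {}" "o1 \<union> ot = Hv"
    and "h \<in> st h" "h' \<in> st h'" and "\<And>x. x \<in> Hv \<Longrightarrow> st x \<in> t"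
    and "h \<in> Hv \<longleftrightarrow> h' \<in> Hv"
  shows "(if st h \<noteq> st h' then (if {st h, st h'} = t then (if st h = ot then 1 else -1) else 0) else (0::int))
     = (if h' \<in> o1 then 1 else 0) - (if h \<in> o1 then 1 else 0)"
proof (cases "h \<in> Hv")
  case True
  then have "h' \<in> Hv" using assms by blast
  have f: "x \<in> o1 \<longleftrightarrow> st x = o1" if "x \<in> Hv" "x \<in> st x" for x
    using assms(1-4) assms(7)[of x] that by blast
  have t1: "st h = o1 \<or> st h = ot" "st h' = o1 \<or> st h' = ot"
    using assms(2,7) True \<open>h' \<in> Hv\<close> by blast+
  show ?thesis using f[OF True assms(5)] f[OF \<open>h' \<in> Hv\<close> assms(6)] t1 assms(1,2)
    by (auto simp: doubleton_eq_iff)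
next
  case False
  then have "h' \<notin> Hv" using assms by blast
  have "st h \<notin> t" using False assms(2,4,5) by blast
  moreover have "h \<notin> o1" "h' \<notin> o1" using False \<open>h' \<notin> Hv\<close> assms(4) by blast+
  ultimately show ?thesis by auto
qed

theorem mainTheorem4:
  fixes V :: "'v set" and H :: "'h set" and E :: "'h set set" and eps :: "'h \<Rightarrow> 'v"
    and tailf :: "'h set \<Rightarrow> 'h" and ori :: "'h set set \<Rightarrow> 'h set"
    and P :: "('h \<times> 'h) list set set" and W :: "('h \<times> 'h) list"
  assumes "graph V H E eps"
    and "four_regular V H eps"
    and "directed_version E tailf"
    and "transitional_orientation V H eps ori"
    and "circuit_partition H E eps P"
    and "closed_walk H E eps W"
  shows "\<forall>t\<in>tau V H eps P.
     (\<Sum>e\<in>E. of_int (sigma tailf W e) * Delta tailf ori e t)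
       = of_int (sigma_trav (tch_tail ori) (pi_P P W) t)"
proof
  fix t assume tt: "t \<in> tau V H eps P"
  then obtain v s1 s2 where v: "v \<in> V" and t: "t = {s1, s2}" and st1: "single_transition H eps s1"
    and st2: "single_transition H eps s2" and dis: "s1 \<inter> s2 = {}"
    and un: "s1 \<union> s2 = {h\<in>H. eps h = v}" and inP: "s1 \<in> P_strans P" "s2 \<in> P_strans P"
    unfolding tau_def transitions_def by auto
  have ne: "s1 \<noteq> {}" "s2 \<noteq> {}" using st1 st2 unfolding single_transition_def by auto
  have s12: "s1 \<noteq> s2" using ne dis by auto
  define o1 where "o1 = ori t"
  have o1t: "o1 \<in> t" using assms(4) tt unfolding o1_def transitional_orientation_def tau_def by auto
  define ot where "ot = tch_tail ori t"
  have ot_eq: "ot \<in> t \<and> ot \<noteq> o1"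
    unfolding ot_def tch_tail_def o1_def[symmetric]
    by (rule theI[where a = "if o1 = s1 then s2 else s1"]) (use o1t t s12 in auto)
  have t2: "t = {o1, ot}" and oo: "o1 \<noteq> ot" using o1t ot_eq t by auto
  have odis: "o1 \<inter> ot = {}" and oun: "o1 \<union> ot = {h\<in>H. eps h = v}"
    using o1t ot_eq t dis un by auto
  have uniq: "s = s'" if A: "x \<in> H" "s \<in> P_strans P" "x \<in> s" "s' \<in> P_strans P" "x \<in> s'" for x s s'
  proof -
    obtain C where C: "C \<in> P" "s \<in> circ_strans C" using A(2) unfolding P_strans_def by auto
    obtain C' where C': "C' \<in> P" "s' \<in> circ_strans C'" using A(4) unfolding P_strans_def by auto
    have "\<exists>!(C, s). C \<in> P \<and> s \<in> circ_strans C \<and> x \<in> s"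
      using assms(5) A(1) unfolding circuit_partition_def by auto
    then have "(C, s) = (C', s')" using C C' A(3,5) by (auto dest: Uniq_D)
    then show ?thesis by simp
  qed
  have ex: "\<exists>s. s \<in> P_strans P \<and> x \<in> s" if xH: "x \<in> H" for x
  proof -
    have "\<exists>!(C, s). C \<in> P \<and> s \<in> circ_strans C \<and> x \<in> s"
      using assms(5) xH unfolding circuit_partition_def by auto
    then obtain C s where "C \<in> P" "s \<in> circ_strans C" "x \<in> s" by auto
    then show ?thesis unfolding P_strans_def by auto
  qed
  have stof: "st_of P x \<in> P_strans P \<and> x \<in> st_of P x" if xH: "x \<in> H" for x
  proof -
    obtain s where s: "s \<in> P_strans P" "x \<in> s" using ex[OF xH] by auto
    show ?thesis unfolding st_of_def
      by (rule theI[of _ s]) (use s uniq[OF xH] in auto)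
  qed
  have stt: "st_of P x \<in> t" if "x \<in> {h\<in>H. eps h = v}" for x
  proof -
    have xH: "x \<in> H" using that by auto
    have "x \<in> s1 \<or> x \<in> s2" using that un by auto
    then show ?thesis using uniq[OF xH] stof[OF xH] inP t by auto
  qed
  define F :: "'h \<Rightarrow> int" where "F x = (if x \<in> o1 then 1 else 0)" for x
  define n where "n = length W"
  have dst: "dir_single_transition H eps (W ! i)" if "i < n" for i
    using assms(6) that unfolding closed_walk_def n_def by auto
  have edge: "{snd (W ! i), fst (W ! (Suc i mod n))} \<in> E" if "i < n" for i
    using assms(6) that unfolding closed_walk_def n_def by auto
  have rhs_i: "(if st_of P (fst (W!i)) \<noteq> st_of P (snd (W!i)) then
        (if {st_of P (fst (W!i)), st_of P (snd (W!i))} = t then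
          (if st_of P (fst (W!i)) = ot then 1 else -1) else 0) else (0::int))
      = F (snd (W!i)) - F (fst (W!i))" if "i < n" for i
  proof -
    have d: "fst (W!i) \<in> H" "snd (W!i) \<in> H" "eps (fst (W!i)) = eps (snd (W!i))"
      using dst[OF that] unfolding dir_single_transition_def by auto
    show ?thesis unfolding F_def
      by (rule pair_case[OF oo t2 odis oun]) (use d stof stt in auto)
  qed
  have rhs: "sigma_trav (tch_tail ori) (pi_P P W) t
      = (\<Sum>i<n. F (snd (W!i)) - F (fst (W!i)))"
  proof -
    have "sigma_trav (tch_tail ori) (pi_P P W) t =
      (\<Sum>p\<leftarrow>W. (if st_of P (fst p) \<noteq> st_of P (snd p) then
        (if {st_of P (fst p), st_of P (snd p)} = t then
          (if st_of P (fst p) = ot then 1 else -1) else 0) else (0::int)))"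
      unfolding sigma_trav_def pi_P_def sum_list_map_filter' ot_def
      by (simp only: map_map o_def fst_conv snd_conv)
    also have "\<dots> = (\<Sum>i\<leftarrow>[0..<n]. (if st_of P (fst (W!i)) \<noteq> st_of P (snd (W!i)) then
        (if {st_of P (fst (W!i)), st_of P (snd (W!i))} = t then
          (if st_of P (fst (W!i)) = ot then 1 else -1) else 0) else (0::int)))"
      unfolding n_def by (subst map_nth[symmetric, of W]) (simp only: map_map o_def)
    also have "\<dots> = (\<Sum>i<n. (if st_of P (fst (W!i)) \<noteq> st_of P (snd (W!i)) then
        (if {st_of P (fst (W!i)), st_of P (snd (W!i))} = t then
          (if st_of P (fst (W!i)) = ot then 1 else -1) else 0) else (0::int)))"
      by (simp add: interv_sum_list_conv_sum_set_nat atLeast0LessThan)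
    also have "\<dots> = (\<Sum>i<n. F (snd (W!i)) - F (fst (W!i)))"
      by (rule sum.cong) (auto simp: rhs_i)
    finally show ?thesis .
  qed
  have sig: "sigma tailf W e = (\<Sum>i<n. (if {snd (W ! i), fst (W ! (Suc i mod n))} = e then
        (if snd (W ! i) = tailf e then 1 else -1) else 0))" for e
    unfolding sigma_def sigma_trav_def walk_travs_def n_def
    by (simp only: map_map o_def fst_conv snd_conv interv_sum_list_conv_sum_set_nat atLeast0LessThan set_upt)
  have finE: "finite E"
  proof -
    have "E \<subseteq> Pow H" using assms(1) unfolding graph_def by auto
    moreover have "finite H" using assms(1) unfolding graph_def by auto
    ultimately show ?thesis by (meson finite_Pow_iff finite_subset)
  qed
  have lhs_i: "(\<Sum>e\<in>E. of_int (if {snd (W ! i), fst (W ! (Suc i mod n))} = e then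
        (if snd (W ! i) = tailf e then 1 else -1) else 0) * Delta tailf ori e t)
      = rat_of_int (F (snd (W!i)) - F (fst (W ! (Suc i mod n))))" if "i < n" for i
  proof -
    let ?a = "snd (W ! i)" and ?b = "fst (W ! (Suc i mod n))"
    have eE: "{?a, ?b} \<in> E" using edge[OF that] .
    have "card {?a, ?b} = 2" using assms(1) eE unfolding graph_def by auto
    then have ab: "?a \<noteq> ?b" by (cases "?a = ?b") auto
    have tl: "tailf {?a, ?b} \<in> {?a, ?b}" using assms(3) eE unfolding directed_version_def by auto
    have "(\<Sum>e\<in>E. of_int (if {?a, ?b} = e then
        (if ?a = tailf e then 1 else -1) else 0) * Delta tailf ori e t)
      = (\<Sum>e\<in>E. if {?a, ?b} = e then of_int
        (if ?a = tailf e then 1 else -1) * Delta tailf ori e t else 0)"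
      by (rule sum.cong) auto
    also have "\<dots> = of_int (if ?a = tailf {?a,?b} then 1 else -1) * Delta tailf ori {?a,?b} t"
      using eE finE by (simp add: sum.delta)
    also have "\<dots> = rat_of_int (F ?a - F ?b)"
      using delta_trav[OF ab tl, of o1] unfolding Delta_def F_def o1_def
      by (simp split: if_splits)
    finally show ?thesis .
  qed
  have "(\<Sum>e\<in>E. of_int (sigma tailf W e) * Delta tailf ori e t)
     = (\<Sum>e\<in>E. \<Sum>i<n. of_int (if {snd (W ! i), fst (W ! (Suc i mod n))} = e then
        (if snd (W ! i) = tailf e then 1 else -1) else 0) * Delta tailf ori e t)"
    unfolding sig by (simp add: sum_distrib_right)
  also have "\<dots> = (\<Sum>i<n. \<Sum>e\<in>E. of_int (if {snd (W ! i), fst (W ! (Suc i mod n))} = e then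
        (if snd (W ! i) = tailf e then 1 else -1) else 0) * Delta tailf ori e t)"
    by (rule sum.swap)
  also have "\<dots> = (\<Sum>i<n. rat_of_int (F (snd (W!i)) - F (fst (W ! (Suc i mod n)))))"
    by (rule sum.cong) (auto simp: lhs_i)
  also have "\<dots> = of_int (\<Sum>i<n. F (snd (W!i))) - of_int (\<Sum>i<n. F (fst (W ! (Suc i mod n))))"
    by (simp add: sum_subtractf)
  also have "\<dots> = of_int (\<Sum>i<n. F (snd (W!i))) - of_int (\<Sum>i<n. F (fst (W ! i)))"
    using shift_sum[of "\<lambda>i. F (fst (W ! i))" n] by simp
  also have "\<dots> = of_int (\<Sum>i<n. F (snd (W!i)) - F (fst (W!i)))"
    by (simp add: sum_subtractf)
  finally show "(\<Sum>e\<in>E. of_int (sigma tailf W e) * Delta tailf ori e t)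
       = of_int (sigma_trav (tch_tail ori) (pi_P P W) t)"
    using rhs by simp
qed

end
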